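(* Let $T>0$, $0<\eta<T$, $\alpha >\frac{2T}{\eta ^{2}}$ and $\beta\geq0$. If $y\in C([0,T],[0,\infty))$, then the problem \[ u''(t)+y(t)=0,\ t\in(0,T),\qquad u(0)=\beta u(\eta),\quad u(T)=\alpha\int_0^\eta u(s)\,ds \] has no positive solutions.
   Context: A solution is a function $u\in C^2([0,T])$ satisfying the differential equation on $(0,T)$ and the two boundary conditions; a positive solution is a solution $u$ with $u(t)>0$ for $0<t<T$. *)

theory Defs
  imports "HOL-Analysis.Analysis"
begin

definition C2_with :: "real \<Rightarrow> real \<Rightarrow> (real \<Rightarrow> real) \<Rightarrow> (real \<Rightarrow> real) \<Rightarrow> (real \<Rightarrow> real) \<Rightarrow> bool" where
  "C2_with a b u u' u'' \<longleftrightarrow>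
     (\<forall>t\<in>{a..b}. (u has_real_derivative u' t) (at t within {a..b})) \<and>
     (\<forall>t\<in>{a..b}. (u' has_real_derivative u'' t) (at t within {a..b})) \<and>
     continuous_on {a..b} u''"

definition bvp_solution :: "real \<Rightarrow> real \<Rightarrow> real \<Rightarrow> real \<Rightarrow> (real \<Rightarrow> real) \<Rightarrow> (real \<Rightarrow> real) \<Rightarrow> bool" where
  "bvp_solution T \<eta> \<alpha> \<beta> y u \<longleftrightarrow>
     (\<exists>u' u''. C2_with 0 T u u' u'' \<and> (\<forall>t\<in>{0<..<T}. u'' t + y t = 0)) \<and>
     u 0 = \<beta> * u \<eta> \<and>
     u T = \<alpha> * integral {0..\<eta>} u"

definition positive_bvp_solution :: "real \<Rightarrow> real \<Rightarrow> real \<Rightarrow> real \<Rightarrow> (real \<Rightarrow> real) \<Rightarrow> (real \<Rightarrow> real) \<Rightarrow> bool" where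
  "positive_bvp_solution T \<eta> \<alpha> \<beta> y u \<longleftrightarrow>
     bvp_solution T \<eta> \<alpha> \<beta> y u \<and> (\<forall>t\<in>{0<..<T}. u t > 0)"

end

theory Submission
  imports Defs
begin

lemma concave_chord:
  fixes u u' u'' :: "real \<Rightarrow> real" and q T s :: real
  assumes q: "0 < q" "q \<le> T" and cu: "continuous_on {0..T} u"
    and d1: "\<And>t. 0 < t \<Longrightarrow> t < T \<Longrightarrow> (u has_real_derivative u' t) (at t)"
    and d2: "\<And>t. 0 < t \<Longrightarrow> t < T \<Longrightarrow> (u' has_real_derivative u'' t) (at t)"
    and neg: "\<And>t. 0 < t \<Longrightarrow> t < T \<Longrightarrow> u'' t \<le> 0"
    and s: "0 \<le> s" "s \<le> q"
  shows "q * u s \<ge> s * u q + (q - s) * u 0"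
proof (cases "s = 0 \<or> s = q")
  case True then show ?thesis by auto
next
  case False
  with s have s': "0 < s" "s < q" by auto
  show ?thesis
  proof (rule ccontr)
    assume A: "\<not> ?thesis"
    define \<phi> where "\<phi> = (\<lambda>x. q * u x - x * u q - (q - x) * u 0)"
    have cphi: "continuous_on {0..q} \<phi>"
      unfolding \<phi>_def using cu q
      by (intro continuous_intros) (auto intro: continuous_on_subset)
    have dphi: "(\<phi> has_derivative (\<lambda>h. (q * u' x - u q + u 0) * h)) (at x)"
      if "0 < x" "x < q" for x
    proof -
      have "(\<phi> has_real_derivative (q * u' x - u q + u 0)) (at x)"
        unfolding \<phi>_def using d1[of x] that q
        by (auto intro!: derivative_eq_intros)
      then show ?thesis by (simp add: has_field_derivative_def)
    qed
    have cs1: "continuous_on {0..s} \<phi>" by (rule continuous_on_subset[OF cphi]) (use s' in auto)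
    have cs2: "continuous_on {s..q} \<phi>" by (rule continuous_on_subset[OF cphi]) (use s' in auto)
    obtain a where a: "0 < a" "a < s" "\<phi> s - \<phi> 0 = (q * u' a - u q + u 0) * (s - 0)"
      using mvt[of 0 s \<phi> "\<lambda>x h. (q * u' x - u q + u 0) * h", OF _ cs1] s' dphi
      by auto
    obtain b where b: "s < b" "b < q" "\<phi> q - \<phi> s = (q * u' b - u q + u 0) * (q - s)"
      using mvt[of s q \<phi> "\<lambda>x h. (q * u' x - u q + u 0) * h", OF _ cs2] s' dphi
      by auto
    have p0: "\<phi> 0 = 0" "\<phi> q = 0" unfolding \<phi>_def by (auto simp: algebra_simps)
    have ps: "\<phi> s < 0" unfolding \<phi>_def using A by auto
    have "(q * u' a - u q + u 0) * s < 0" using a(3) p0 ps by simp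
    hence ia: "q * u' a - u q + u 0 < 0" using s' by (simp add: mult_less_0_iff)
    have "(q * u' b - u q + u 0) * (q - s) > 0" using b(3) p0 ps by simp
    hence ib: "q * u' b - u q + u 0 > 0" using s' by (simp add: zero_less_mult_iff)
    have "q * u' a < q * u' b" using ia ib by linarith
    hence "u' a < u' b" using q by simp
    moreover obtain c where c: "a < c" "c < b" "u' b - u' a = (b - a) * u'' c"
      using MVT2[of a b u' u''] a b s' q d2 by auto
    moreover have "u'' c \<le> 0" using neg c a b q by auto
    ultimately show False using a b s' mult_nonneg_nonpos[of "b - a" "u'' c"]
      by linarith
  qed
qed

theorem lemma2p3:
  fixes T \<eta> \<alpha> \<beta> :: real and y :: "real \<Rightarrow> real"
  assumes "T > 0" and "0 < \<eta>" and "\<eta> < T" and "\<alpha> > 2 * T / \<eta>\<^sup>2" and "\<beta> \<ge> 0"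
    and "continuous_on {0..T} y" and "\<forall>t\<in>{0..T}. y t \<ge> 0"
  shows "\<not> (\<exists>u. positive_bvp_solution T \<eta> \<alpha> \<beta> y u)"
proof
  assume "\<exists>u. positive_bvp_solution T \<eta> \<alpha> \<beta> y u"
  then obtain u u' u'' where C: "C2_with 0 T u u' u''" and eq: "\<forall>t\<in>{0<..<T}. u'' t + y t = 0"
    and bc0: "u 0 = \<beta> * u \<eta>" and bcT: "u T = \<alpha> * integral {0..\<eta>} u"
    and pos: "\<forall>t\<in>{0<..<T}. u t > 0"
    unfolding positive_bvp_solution_def bvp_solution_def by blast
  have D1: "\<forall>t\<in>{0..T}. (u has_real_derivative u' t) (at t within {0..T})"
    and D2: "\<forall>t\<in>{0..T}. (u' has_real_derivative u'' t) (at t within {0..T})"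
    using C unfolding C2_with_def by auto
  have cu: "continuous_on {0..T} u" using D1 by (intro DERIV_continuous_on) auto
  have d1: "(u has_real_derivative u' t) (at t)" if "0 < t" "t < T" for t
  proof -
    have "(u has_real_derivative u' t) (at t within {0..T})" using D1 that by auto
    then show ?thesis using at_within_Icc_at[of 0 t T] that by simp
  qed
  have d2: "(u' has_real_derivative u'' t) (at t)" if "0 < t" "t < T" for t
  proof -
    have "(u' has_real_derivative u'' t) (at t within {0..T})" using D2 that by auto
    then show ?thesis using at_within_Icc_at[of 0 t T] that by simp
  qed
  have neg: "u'' t \<le> 0" if "0 < t" "t < T" for t
  proof -
    have "u'' t + y t = 0" using eq that by auto
    moreover have "y t \<ge> 0" using assms(7) that by auto
    ultimately show ?thesis by linarith
  qed
  have ueta: "u \<eta> > 0" using pos assms by auto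
  have u0: "u 0 \<ge> 0" using bc0 ueta assms(5) by simp
  have cT: "T * u s \<ge> s * u T" if "0 \<le> s" "s \<le> T" for s
  proof -
    have "T * u s \<ge> s * u T + (T - s) * u 0"
      using concave_chord[OF assms(1) order_refl cu d1 d2 neg that] .
    moreover have "(T - s) * u 0 \<ge> 0" using that u0 by simp
    ultimately show ?thesis by linarith
  qed
  have cE: "\<eta> * u s \<ge> s * u \<eta>" if "0 \<le> s" "s \<le> \<eta>" for s
  proof -
    have "\<eta> * u s \<ge> s * u \<eta> + (\<eta> - s) * u 0"
      using concave_chord[OF assms(2) _ cu d1 d2 neg that] assms by auto
    moreover have "(\<eta> - s) * u 0 \<ge> 0" using that u0 by simp
    ultimately show ?thesis by linarith
  qed
  have intu: "u integrable_on {0..\<eta>}"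
    using cu assms by (intro integrable_continuous_interval) (auto intro: continuous_on_subset)
  have hi: "((\<lambda>s. s * c) has_integral (\<eta>\<^sup>2 / 2 * c)) {0..\<eta>}" for c :: real
  proof -
    have "((\<lambda>s. s * c) has_integral ((\<lambda>s. s\<^sup>2 / 2 * c) \<eta> - (\<lambda>s. s\<^sup>2 / 2 * c) 0)) {0..\<eta>}"
      using assms(2)
      by (intro fundamental_theorem_of_calculus)
         (auto intro!: derivative_eq_intros simp: has_real_derivative_iff_has_vector_derivative[symmetric])
    then show ?thesis by (simp add: power2_eq_square)
  qed
  have I1: "integral {0..\<eta>} u \<ge> \<eta>\<^sup>2 / 2 * (u T / T)"
  proof -
    have "integral {0..\<eta>} (\<lambda>s. s * (u T / T)) \<le> integral {0..\<eta>} u"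
    proof (rule integral_le)
      show "(\<lambda>s. s * (u T / T)) integrable_on {0..\<eta>}" using hi by blast
      show "u integrable_on {0..\<eta>}" by (rule intu)
      fix s assume "s \<in> {0..\<eta>}"
      then have "T * u s \<ge> s * u T" using cT assms by auto
      then show "s * (u T / T) \<le> u s" using assms(1)
        by (simp add: field_simps)
    qed
    then show ?thesis using integral_unique[OF hi[of "u T / T"]] by simp
  qed
  have I2: "integral {0..\<eta>} u \<ge> \<eta>\<^sup>2 / 2 * (u \<eta> / \<eta>)"
  proof -
    have "integral {0..\<eta>} (\<lambda>s. s * (u \<eta> / \<eta>)) \<le> integral {0..\<eta>} u"
    proof (rule integral_le)
      show "(\<lambda>s. s * (u \<eta> / \<eta>)) integrable_on {0..\<eta>}" using hi by blast
      show "u integrable_on {0..\<eta>}" by (rule intu)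
      fix s assume "s \<in> {0..\<eta>}"
      then have "\<eta> * u s \<ge> s * u \<eta>" using cE assms by auto
      then show "s * (u \<eta> / \<eta>) \<le> u s" using assms(2)
        by (simp add: field_simps)
    qed
    then show ?thesis using integral_unique[OF hi[of "u \<eta> / \<eta>"]] by simp
  qed
  have Ipos: "integral {0..\<eta>} u > 0"
  proof -
    have "\<eta>\<^sup>2 / 2 * (u \<eta> / \<eta>) > 0" using ueta assms(2) by simp
    then show ?thesis using I2 by linarith
  qed
  have apos: "\<alpha> > 0"
  proof -
    have "2 * T / \<eta>\<^sup>2 > 0" using assms(1,2) by simp
    then show ?thesis using assms(4) by linarith
  qed
  have uTpos: "u T > 0" using bcT Ipos apos by simp
  have k: "\<alpha> * (\<eta>\<^sup>2 / (2 * T)) > 1"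
    using assms(1,2,4) by (simp add: field_simps)
  have "u T \<ge> \<alpha> * (\<eta>\<^sup>2 / 2 * (u T / T))"
    using bcT mult_left_mono[OF I1, of \<alpha>] apos by simp
  also have "\<alpha> * (\<eta>\<^sup>2 / 2 * (u T / T)) = (\<alpha> * (\<eta>\<^sup>2 / (2 * T))) * u T" by simp
  finally have "u T \<ge> (\<alpha> * (\<eta>\<^sup>2 / (2 * T))) * u T" .
  moreover have "(\<alpha> * (\<eta>\<^sup>2 / (2 * T))) * u T > 1 * u T"
    by (rule mult_strict_right_mono[OF k uTpos])
  ultimately show False by simp
qed

end
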